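(* Let $p_1,p_2\ge 5$ be distinct primes, $e_i=\zeta_{p_1}^i+\zeta_{p_1}^{-i}$, $b_j=\zeta_{p_2}^j+\zeta_{p_2}^{-j}$, $n_1=\frac{p_1-1}{2}$, $n_2=\frac{p_2-1}{2}$, and $\mathbb{K}=\mathbb{Q}(\zeta_{p_1}+\zeta_{p_1}^{-1})\mathbb{Q}(\zeta_{p_2}+\zeta_{p_2}^{-1})$. Let $\mathcal{I}\subseteq\mathcal{O}_{\mathbb{K}}$ be the $\mathbb{Z}$-module with $\mathbb{Z}$-basis consisting of all products $e_ib_j$ ($1\le i\le n_1$, $1\le j\le n_2$) except that $e_{n_1}b_{n_2}$ is replaced by $2e_{n_1}b_{n_2}$. Then $\mathcal{I}$ is not an ideal of $\mathcal{O}_{\mathbb{K}}$.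
   Context: $\zeta_m=e^{2\pi i/m}$. *)

theory Defs
  imports Complex_Main "HOL-Computational_Algebra.Polynomial"
begin

definition zeta :: "nat \<Rightarrow> complex" where
  "zeta m = exp (2 * of_real pi * \<i> / of_nat m)"

definition subfield_gen :: "complex set \<Rightarrow> complex set" where
  "subfield_gen S = \<Inter>{F. S \<subseteq> F \<and> 1 \<in> F \<and>
      (\<forall>x\<in>F. \<forall>y\<in>F. x + y \<in> F \<and> x * y \<in> F \<and> - x \<in> F \<and> inverse x \<in> F)}"

text \<open>The compositum Q(zeta p1 + zeta p1^-1) Q(zeta p2 + zeta p2^-1) = Q(both generators).\<close>
definition KK :: "nat \<Rightarrow> nat \<Rightarrow> complex set" where
  "KK p1 p2 = subfield_gen {zeta p1 + inverse (zeta p1), zeta p2 + inverse (zeta p2)}"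

definition ring_of_integers :: "complex set \<Rightarrow> complex set" where
  "ring_of_integers K = {x \<in> K. algebraic_int x}"

definition ee :: "nat \<Rightarrow> int \<Rightarrow> complex" where
  "ee p i = zeta p powi i + zeta p powi (- i)"

definition basis_elt :: "nat \<Rightarrow> nat \<Rightarrow> nat \<Rightarrow> nat \<Rightarrow> complex" where
  "basis_elt p1 p2 i j =
     (if i = (p1 - 1) div 2 \<and> j = (p2 - 1) div 2 then 2 else 1)
       * ee p1 (int i) * ee p2 (int j)"

definition II :: "nat \<Rightarrow> nat \<Rightarrow> complex set" where
  "II p1 p2 = {\<Sum>i\<in>{1..(p1 - 1) div 2}. \<Sum>j\<in>{1..(p2 - 1) div 2}.
                  of_int (c i j) * basis_elt p1 p2 i j | c :: nat \<Rightarrow> nat \<Rightarrow> int. True}"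

end

theory Submission
  imports Defs "Jordan_Normal_Form.Char_Poly" "HOL-Computational_Algebra.Polynomial_Factorial" "HOL-Computational_Algebra.Field_as_Ring"
begin


definition Zw :: "complex \<Rightarrow> complex set" where
  "Zw w = {poly (of_int_poly h) w | h :: int poly. True}"

lemma Zw_of_int [intro]: "of_int k \<in> Zw w"
proof -
  have "poly (of_int_poly [:k:]) w = (of_int k :: complex)" by (simp add: of_int_hom.map_poly_pCons_hom)
  thus ?thesis unfolding Zw_def by (intro CollectI exI[of _ "[:k:]"]) simp
qed

lemma Zw_0 [intro]: "0 \<in> Zw w" and Zw_1 [intro]: "1 \<in> Zw w"
  using Zw_of_int[of 0 w] Zw_of_int[of 1 w] by simp_all

lemma Zw_of_nat [intro]: "of_nat k \<in> Zw w"
  using Zw_of_int[of "int k" w] by simp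

lemma Zw_w [intro]: "w \<in> Zw w"
proof -
  have "poly (of_int_poly [:0,1:]) w = w" by simp
  thus ?thesis unfolding Zw_def by (intro CollectI exI[of _ "[:0,1:]"]) simp
qed

lemma Zw_add [intro]: "x \<in> Zw w \<Longrightarrow> y \<in> Zw w \<Longrightarrow> x + y \<in> Zw w"
proof -
  assume "x \<in> Zw w" "y \<in> Zw w"
  then obtain a b where "x = poly (of_int_poly a) w" "y = poly (of_int_poly b) w" unfolding Zw_def by blast
  hence "x + y = poly (of_int_poly (a + b)) w" by (simp add: of_int_hom.map_poly_hom_add)
  thus ?thesis unfolding Zw_def by blast
qed

lemma Zw_mult [intro]: "x \<in> Zw w \<Longrightarrow> y \<in> Zw w \<Longrightarrow> x * y \<in> Zw w"
proof -
  assume "x \<in> Zw w" "y \<in> Zw w"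
  then obtain a b where "x = poly (of_int_poly a) w" "y = poly (of_int_poly b) w" unfolding Zw_def by blast
  hence "x * y = poly (of_int_poly (a * b)) w" by (simp add: of_int_poly_hom.hom_mult)
  thus ?thesis unfolding Zw_def by blast
qed

lemma Zw_uminus [intro]: "x \<in> Zw w \<Longrightarrow> - x \<in> Zw w"
proof -
  assume "x \<in> Zw w"
  then obtain a where "x = poly (of_int_poly a) w" unfolding Zw_def by blast
  hence "- x = poly (of_int_poly (- a)) w" by (simp add: of_int_poly_hom.hom_uminus)
  thus ?thesis unfolding Zw_def by blast
qed

lemma Zw_diff [intro]: "x \<in> Zw w \<Longrightarrow> y \<in> Zw w \<Longrightarrow> x - y \<in> Zw w"
  using Zw_add[of x w "-y"] Zw_uminus[of y w] by simp

lemma Zw_power [intro]: "x \<in> Zw w \<Longrightarrow> x ^ n \<in> Zw w"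
  by (induction n) auto

lemma Zw_sum [intro]: "(\<And>i. i \<in> A \<Longrightarrow> f i \<in> Zw w) \<Longrightarrow> sum f A \<in> Zw w"
  by (induction A rule: infinite_finite_induct) auto

lemma Zw_poly [intro]: "y \<in> Zw w \<Longrightarrow> poly (of_int_poly h) y \<in> Zw w"
  by (induction h) (auto simp: map_poly_pCons)




lemma w_pow_mod: fixes w :: complex assumes "w ^ N = 1" shows "w ^ (n mod N) = w ^ n"
proof -
  have "w ^ (N * (n div N) + n mod N) = (w ^ N) ^ (n div N) * w ^ (n mod N)"
    by (simp only: power_add power_mult)
  thus ?thesis using assms by simp
qed

lemma Zw_algebraic_int:
  fixes w :: complex
  assumes wN: "w ^ N = 1" and N: "N > 0" and x: "x \<in> Zw w"
  shows "algebraic_int x"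
proof -
  from x obtain h where xh: "x = poly (of_int_poly h) w" unfolding Zw_def by blast
  define D where "D = degree h"
  have xs: "x = (\<Sum>k\<le>D. of_int (coeff h k) * w ^ k)"
    unfolding xh D_def by (simp add: poly_altdef of_int_hom.degree_map_poly_hom)
  define M :: "int mat" where "M = mat N N (\<lambda>(j,m). \<Sum>k\<le>D. (if (j+k) mod N = m then coeff h k else 0))"
  define v :: "complex vec" where "v = vec N (\<lambda>j. w ^ j)"
  have Mc: "M \<in> carrier_mat N N" unfolding M_def by simp
  have Mc': "of_int_hom.mat_hom M \<in> carrier_mat N N" using Mc by simp
  have ev: "eigenvector (of_int_hom.mat_hom M) v x"
    unfolding eigenvector_def
  proof (intro conjI)
    show "v \<in> carrier_vec (dim_row (of_int_hom.mat_hom M))" using Mc unfolding v_def by simp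
    have "v $ 0 = 1" using N unfolding v_def by simp
    thus "v \<noteq> 0\<^sub>v (dim_row (of_int_hom.mat_hom M))" using Mc N
      by (metis carrier_matD(1) index_map_mat(2) index_zero_vec(1) zero_neq_one)
    show "of_int_hom.mat_hom M *\<^sub>v v = x \<cdot>\<^sub>v v"
    proof (rule eq_vecI)
      show "dim_vec (of_int_hom.mat_hom M *\<^sub>v v) = dim_vec (x \<cdot>\<^sub>v v)" using Mc unfolding v_def by simp
      fix j assume "j < dim_vec (x \<cdot>\<^sub>v v)"
      hence j: "j < N" unfolding v_def by simp
      have "(of_int_hom.mat_hom M *\<^sub>v v) $ j = (\<Sum>m<N. of_int (M $$ (j,m)) * w ^ m)"
        using j Mc unfolding v_def by (simp add: scalar_prod_def atLeast0LessThan)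
      also have "\<dots> = (\<Sum>m<N. \<Sum>k\<le>D. (if (j+k) mod N = m then of_int (coeff h k) * w ^ m else 0))"
        using j unfolding M_def by (auto simp: sum_distrib_right of_int_sum intro!: sum.cong)
      also have "\<dots> = (\<Sum>k\<le>D. \<Sum>m<N. (if (j+k) mod N = m then of_int (coeff h k) * w ^ m else 0))"
        by (rule sum.swap)
      also have "\<dots> = (\<Sum>k\<le>D. of_int (coeff h k) * w ^ ((j+k) mod N))"
        using N by (intro sum.cong refl) (simp add: sum.delta)
      also have "\<dots> = (\<Sum>k\<le>D. w ^ j * (of_int (coeff h k) * w ^ k))"
        by (intro sum.cong refl) (simp add: w_pow_mod[OF wN] power_add)
      also have "\<dots> = w ^ j * x" unfolding xs by (simp add: sum_distrib_left)
      also have "\<dots> = (x \<cdot>\<^sub>v v) $ j" using j unfolding v_def by simp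
      finally show "(of_int_hom.mat_hom M *\<^sub>v v) $ j = (x \<cdot>\<^sub>v v) $ j" .
    qed
  qed
  hence "eigenvalue (of_int_hom.mat_hom M) x" unfolding eigenvalue_def by blast
  hence root: "poly (char_poly (of_int_hom.mat_hom M)) x = 0"
    using eigenvalue_root_char_poly[OF Mc'] by blast
  have cp: "char_poly (of_int_hom.mat_hom M) = of_int_poly (char_poly M)"
    using of_int_hom.char_poly_hom[OF Mc] .
  from degree_monic_char_poly[OF Mc] have dm: "degree (char_poly M) = N" "coeff (char_poly M) N = 1" by auto
  show ?thesis
  proof (rule algebraic_int.intros[of "of_int_poly (char_poly M)"])
    show "lead_coeff (of_int_poly (char_poly M) :: complex poly) = 1"
      using dm by (simp add: of_int_hom.degree_map_poly_hom)
    show "\<forall>i. coeff (of_int_poly (char_poly M) :: complex poly) i \<in> \<int>" by simp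
    show "poly (of_int_poly (char_poly M)) x = 0" using root unfolding cp .
  qed
qed

lemma Zw_rat_int:
  fixes w :: complex
  assumes "w ^ N = 1" "N > 0" "x \<in> Zw w" "x \<in> \<rat>"
  shows "x \<in> \<int>"
  using rational_algebraic_int_is_int Zw_algebraic_int assms by blast




lemma zeta_cis: "N > 0 \<Longrightarrow> zeta N = cis (2 * pi / real N)"
  unfolding zeta_def cis_conv_exp by (simp add: field_simps)

lemma zeta_pow_N: "N > 0 \<Longrightarrow> zeta N ^ N = 1"
  by (simp add: zeta_cis DeMoivre)

lemma root_unity_Zw:
  assumes N: "N > 0" and z: "z ^ N = 1"
  shows "z \<in> Zw (zeta N)"
proof -
  from bij_betw_roots_unity[OF N] z obtain k where "z = cis (2 * pi * real k / real N)"
    unfolding bij_betw_def by auto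
  also have "\<dots> = zeta N ^ k" using N by (simp add: zeta_cis DeMoivre mult_ac)
  finally show ?thesis by auto
qed

lemma monic_dvd_Zw:
  fixes q :: "complex poly"
  assumes N: "N > 0" and lc: "lead_coeff q = 1" and dv: "q dvd (monom 1 N - 1)"
  shows "coeff q i \<in> Zw (zeta N)"
  using lc dv
proof (induction "degree q" arbitrary: q i rule: less_induct)
  case less
  show ?case
  proof (cases "degree q = 0")
    case True
    show ?thesis
    proof (cases i)
      case 0 thus ?thesis using less.prems(1) True by auto
    next
      case (Suc j) thus ?thesis using True by (simp add: coeff_eq_0 Zw_0)
    qed
  next
    case False
    hence "\<not> constant (poly q)" by (simp add: constant_degree)
    then obtain z where z: "poly q z = 0" using fundamental_theorem_of_algebra by blast
    then obtain q' where q': "q = [:-z,1:] * q'" using poly_eq_0_iff_dvd by (metis dvdE)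
    have q'0: "q' \<noteq> 0" using q' less.prems(1) by auto
    have "lead_coeff q = lead_coeff [:-z,1:] * lead_coeff q'" unfolding q' by (rule lead_coeff_mult)
    hence lc': "lead_coeff q' = 1" using less.prems(1) by simp
    have "degree q = degree [:-z,1:] + degree q'" unfolding q' by (rule degree_mult_eq) (use q'0 in auto)
    hence dq: "degree q = Suc (degree q')" by simp
    have dv': "q' dvd (monom 1 N - 1)" using less.prems(2) q' by (metis dvd_mult_right)
    have IH: "\<And>j. coeff q' j \<in> Zw (zeta N)" using less.hyps[of q'] dq lc' dv' by auto
    have "poly (monom 1 N - 1) z = 0" using less.prems(2) z by (metis dvd_def mult_zero_left poly_mult)
    hence "z ^ N = 1" by (simp add: poly_monom)
    hence zZ: "z \<in> Zw (zeta N)" using root_unity_Zw N by blast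
    have "coeff q i = - z * coeff q' i + (if i = 0 then 0 else coeff q' (i - 1))"
      unfolding q' by (cases i) (auto simp: coeff_pCons)
    thus ?thesis using IH zZ by auto
  qed
qed




lemma frob_gen:
  fixes x y :: "'a::comm_ring_1"
  assumes p: "prime p"
  shows "(x+y)^p = x^p + y^p + of_nat p * (\<Sum>k\<in>{1..p-1}. of_nat ((p choose k) div p) * x^k * y^(p-k))"
proof -
  have p1: "p \<ge> 2" using p prime_ge_2_nat by blast
  have "(x+y)^p = (\<Sum>k\<le>p. of_nat (p choose k) * x^k * y^(p-k))" by (rule binomial_ring)
  also have "{..p} = insert 0 (insert p {1..p-1})" using p1 by auto
  also have "(\<Sum>k\<in>insert 0 (insert p {1..p-1}). of_nat (p choose k) * x^k * y^(p-k)) =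
     y^p + (x^p + (\<Sum>k\<in>{1..p-1}. of_nat (p choose k) * x^k * y^(p-k)))"
    using p1 by (subst sum.insert; simp)+
  also have "(\<Sum>k\<in>{1..p-1}. of_nat (p choose k) * x^k * y^(p-k)) =
      (\<Sum>k\<in>{1..p-1}. of_nat p * (of_nat ((p choose k) div p) * x^k * y^(p-k)))"
  proof (intro sum.cong refl)
    fix k assume k: "k \<in> {1..p-1}"
    have "p dvd (p choose k)" using k p1 by (intro dvd_choose_prime p) auto
    hence "(p choose k) = p * ((p choose k) div p)" by simp
    hence "(of_nat (p choose k) :: 'a) = of_nat p * of_nat ((p choose k) div p)"
      by (metis of_nat_mult)
    thus "of_nat (p choose k) * x^k * y^(p-k) = of_nat p * (of_nat ((p choose k) div p) * x^k * y^(p-k))"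
      by (simp add: mult_ac)
  qed
  finally show ?thesis by (simp add: sum_distrib_left algebra_simps)
qed

lemma frob_Zw:
  assumes p: "prime p" and u: "u \<in> Zw w" and v: "v \<in> Zw w"
  shows "\<exists>y\<in>Zw w. (u+v)^p = u^p + v^p + of_nat p * y"
proof -
  have "(\<Sum>k\<in>{1..p-1}. of_nat ((p choose k) div p) * u^k * v^(p-k)) \<in> Zw w"
    using u v by (intro Zw_sum Zw_mult Zw_power Zw_of_nat)
  thus ?thesis using frob_gen[OF p, of u v] by blast
qed

lemma fermat_nat_aux:
  assumes p: "prime p"
  shows "(int a)^p mod int p = int a mod int p"
proof (induction a)
  case 0 have "p \<noteq> 0" using p by (simp add: prime_gt_0_nat)
  thus ?case by (simp add: power_0_left)
next
  case (Suc a)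
  obtain S where S: "(int a + 1)^p = int a ^ p + 1 + int p * S"
    using frob_gen[OF p, of "int a" 1] unfolding power_one by blast
  have "(int (Suc a))^p mod int p = (int a + 1)^p mod int p" by (simp add: add.commute)
  also have "\<dots> = (int a ^ p + 1 + int p * S) mod int p" unfolding S ..
  also have "\<dots> = (int a ^ p + 1) mod int p" by simp
  finally have "(int (Suc a))^p mod int p = (int a ^ p + 1) mod int p" .
  also have "\<dots> = (int a ^ p mod int p + 1) mod int p" by (simp add: mod_simps)
  also have "\<dots> = int (Suc a) mod int p" using Suc.IH by (simp add: mod_simps add.commute)
  finally show ?case .
qed

lemma fermat_int:
  assumes p: "prime p"
  shows "\<exists>k. (a::int)^p = a + int p * k"
proof -
  have pp: "int p > 0" using p by (simp add: prime_gt_0_nat)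
  define r where "r = a mod int p"
  have r0: "r \<ge> 0" using pp unfolding r_def by simp
  have "a^p mod int p = r^p mod int p" unfolding r_def by (rule power_mod[symmetric])
  also have "r = int (nat r)" using r0 by simp
  also have "(int (nat r))^p mod int p = int (nat r) mod int p" by (rule fermat_nat_aux[OF p])
  also have "int (nat r) = r" using r0 by simp
  also have "r mod int p = a mod int p" unfolding r_def by (rule mod_mod_trivial)
  finally have "a^p mod int p = a mod int p" .
  hence "int p dvd a^p - a" by (rule mod_eq_dvd_iff[THEN iffD1])
  then obtain k where "a^p - a = int p * k" by (rule dvdE)
  thus ?thesis by (intro exI[of _ k]) simp
qed

lemma frob_poly:
  assumes p: "prime p" and x: "x \<in> Zw w"
  shows "\<exists>y\<in>Zw w. poly (of_int_poly h) x ^ p = poly (of_int_poly h) (x^p) + of_nat p * y"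
proof (induction h)
  case 0 thus ?case using p by (auto simp: prime_gt_0_nat zero_power intro!: bexI[of _ 0])
next
  case (pCons a q)
  from pCons.IH obtain y1 where y1: "y1 \<in> Zw w" "poly (of_int_poly q) x ^ p = poly (of_int_poly q) (x^p) + of_nat p * y1" by blast
  obtain k where k: "a^p = a + int p * k" using fermat_int[OF p] by blast
  have Q: "poly (of_int_poly q) x \<in> Zw w" using x by auto
  obtain y2 where y2: "y2 \<in> Zw w" "(of_int a + x * poly (of_int_poly q) x)^p = (of_int a)^p + (x * poly (of_int_poly q) x)^p + of_nat p * y2"
    using frob_Zw[OF p, of "of_int a" w "x * poly (of_int_poly q) x"] Q x by auto
  have ap: "(of_int a :: complex)^p = of_int a + of_nat p * of_int k"
    using arg_cong[OF k, of "of_int :: int \<Rightarrow> complex"] by simp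
  have "poly (of_int_poly (pCons a q)) x ^ p = (of_int a + x * poly (of_int_poly q) x)^p"
    by (simp add: of_int_hom.map_poly_pCons_hom)
  also have "\<dots> = of_int a + x^p * poly (of_int_poly q) (x^p) + of_nat p * (of_int k + x^p * y1 + y2)"
    unfolding y2(2) ap power_mult_distrib y1(2) by (simp add: algebra_simps)
  also have "of_int a + x^p * poly (of_int_poly q) (x^p) = poly (of_int_poly (pCons a q)) (x^p)"
    by (simp add: of_int_hom.map_poly_pCons_hom)
  finally show ?case using y1 y2 x by blast
qed




lemma rat_poly_int:
  fixes q :: "rat poly"
  assumes "\<And>i. (of_rat (coeff q i) :: complex) \<in> \<int>"
  shows "(of_int_poly (map_poly floor q) :: complex poly) = map_poly of_rat q"
proof (rule poly_eqI)
  fix i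
  from assms[of i] obtain k where k: "(of_rat (coeff q i) :: complex) = of_int k" by (elim Ints_cases)
  hence "(of_rat (coeff q i) :: complex) = of_rat (of_int k)" by simp
  hence "coeff q i = of_int k" by (simp only: of_rat_eq_iff)
  thus "coeff (of_int_poly (map_poly floor q) :: complex poly) i = coeff (map_poly of_rat q) i"
    using k by (simp add: coeff_map_poly)
qed

interpretation rpoly: map_poly_comm_ring_hom "of_rat :: rat \<Rightarrow> complex" ..

lemma conj_step:
  fixes x :: complex and g :: "int poly"
  assumes N: "N > 0" and x: "x \<in> Zw (zeta N)" and xN: "x ^ N = 1"
    and g0: "poly (of_int_poly g) x = 0" and p: "prime p" and np: "\<not> p dvd N"
  shows "poly (of_int_poly g) (x ^ p) = 0"
proof (rule ccontr)
  assume gne: "poly (of_int_poly g) (x ^ p) \<noteq> 0"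
  define w where "w = zeta N"
  have wN: "w ^ N = 1" unfolding w_def using zeta_pow_N[OF N] .
  define F :: "rat poly" where "F = monom 1 N - 1"
  define G :: "rat poly" where "G = of_int_poly g"
  have F0: "F \<noteq> 0"
  proof
    assume "F = 0"
    hence "coeff F N = 0" by simp
    thus False using N unfolding F_def by (simp add: coeff_monom)
  qed
  define d0 where "d0 = gcd G F"
  have d00: "d0 \<noteq> 0" unfolding d0_def using F0 by simp
  define c where "c = lead_coeff d0"
  have c0: "c \<noteq> 0" unfolding c_def using d00 by simp
  define d where "d = Polynomial.smult (inverse c) d0"
  have lcd: "lead_coeff d = 1" unfolding d_def c_def using c0 c_def by (simp add: field_simps)
  have d0d: "d0 = Polynomial.smult c d" unfolding d_def using c0 by simp
  have dG: "d dvd G" unfolding d_def d0_def using c0 by (simp add: smult_dvd_iff)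
  have dF: "d dvd F" unfolding d_def d0_def using c0 by (simp add: smult_dvd_iff)
  then obtain e where Fde: "F = d * e" by (elim dvdE)
  have lcF: "lead_coeff F = 1"
  proof -
    have "degree F = N" unfolding F_def using N
      by (subst diff_conv_add_uminus, subst degree_add_eq_left) (auto simp: degree_monom_eq)
    thus ?thesis unfolding F_def using N by (simp add: coeff_monom)
  qed
  have lce: "lead_coeff e = 1" using lcF lcd unfolding Fde by (simp add: lead_coeff_mult)
  define Dc :: "complex poly" where "Dc = map_poly of_rat d"
  define Ec :: "complex poly" where "Ec = map_poly of_rat e"
  have Fc: "map_poly of_rat F = (monom 1 N - 1 :: complex poly)"
    unfolding F_def by (rule poly_eqI) (simp add: coeff_map_poly coeff_monom of_rat_diff)
  have DE: "Dc * Ec = monom 1 N - 1"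
    unfolding Dc_def Ec_def Fc[symmetric] Fde by (simp add: rpoly.hom_mult)
  have lcDc: "lead_coeff Dc = 1" unfolding Dc_def using lcd by simp
  have lcEc: "lead_coeff Ec = 1" unfolding Ec_def using lce by simp
  have Dint: "\<And>i. (of_rat (coeff d i) :: complex) \<in> \<int>"
  proof -
    fix i
    have "coeff Dc i \<in> Zw w" unfolding w_def using monic_dvd_Zw[OF N lcDc, of i] DE by (metis dvd_triv_left)
    hence "coeff Dc i \<in> \<int>" using Zw_rat_int[OF wN N] unfolding Dc_def by (simp add: coeff_map_poly)
    thus "(of_rat (coeff d i) :: complex) \<in> \<int>" unfolding Dc_def by (simp add: coeff_map_poly)
  qed
  have Eint: "\<And>i. (of_rat (coeff e i) :: complex) \<in> \<int>"
  proof -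
    fix i
    have "coeff Ec i \<in> Zw w" unfolding w_def using monic_dvd_Zw[OF N lcEc, of i] DE by (metis dvd_triv_right)
    hence "coeff Ec i \<in> \<int>" using Zw_rat_int[OF wN N] unfolding Ec_def by (simp add: coeff_map_poly)
    thus "(of_rat (coeff e i) :: complex) \<in> \<int>" unfolding Ec_def by (simp add: coeff_map_poly)
  qed
  define Di where "Di = map_poly floor d"
  define Ei where "Ei = map_poly floor e"
  have DiDc: "of_int_poly Di = Dc" unfolding Di_def Dc_def by (rule rat_poly_int[OF Dint])
  have EiEc: "of_int_poly Ei = Ec" unfolding Ei_def Ec_def by (rule rat_poly_int[OF Eint])
  have Gc: "map_poly of_rat G = (of_int_poly g :: complex poly)"
    unfolding G_def by (simp add: map_poly_map_poly o_def)
  obtain u v where uv: "u * G + v * F = d0" using bezout_coefficients_fst_snd[of G F] unfolding d0_def by blast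
  have "poly (map_poly of_rat d0) x = poly (map_poly of_rat u) x * poly (map_poly of_rat G) x + poly (map_poly of_rat v) x * poly (map_poly of_rat F) x"
    unfolding uv[symmetric] by (simp add: rpoly.hom_add rpoly.hom_mult)
  also have "\<dots> = 0" unfolding Gc Fc using g0 xN by (simp add: poly_monom)
  finally have "poly (map_poly of_rat d0) x = 0" .
  hence Dx: "poly Dc x = 0" unfolding Dc_def d0d by (simp add: of_rat_hom.map_poly_hom_smult c0)
  obtain y where y: "y \<in> Zw w" "poly (of_int_poly Di) x ^ p = poly (of_int_poly Di) (x^p) + of_nat p * y"
    using frob_poly[OF p, of x w Di] x unfolding w_def by blast
  have p0: "p \<noteq> 0" using p by (simp add: prime_gt_0_nat)
  have Dxp: "poly Dc (x^p) = - of_nat p * y" using y(2) Dx p0 unfolding DiDc by (simp add: power_0_left eq_neg_iff_add_eq_0)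
  have "Dc dvd of_int_poly g" unfolding Dc_def Gc[symmetric] using dG by (rule rpoly.hom_dvd)
  then obtain r where r: "of_int_poly g = Dc * r" by (elim dvdE)
  have Dxp0: "poly Dc (x^p) \<noteq> 0" using gne unfolding r by simp
  have "poly (Dc * Ec) (x^p) = 0" unfolding DE using xN by (simp add: poly_monom power_mult[symmetric] mult.commute[of p N] power_mult)
  hence Exp: "poly Ec (x^p) = 0" using Dxp0 by simp
  have "pderiv (Dc * Ec) = monom (of_nat N) (N - 1)" unfolding DE by (simp add: pderiv_diff pderiv_monom)
  hence h1: "pderiv Dc * Ec + Dc * pderiv Ec = monom (of_nat N) (N - 1)" by (metis pderiv_mult add.commute mult.commute)
  have "poly (pderiv Dc * Ec + Dc * pderiv Ec) (x^p) = of_nat N * (x^p)^(N-1)"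
    unfolding h1 by (simp add: poly_monom)
  hence eq1: "of_nat N * (x^p)^(N-1) = poly Dc (x^p) * poly (pderiv Ec) (x^p)" using Exp by simp
  have E'Z: "poly (pderiv Ec) (x^p) \<in> Zw w"
    unfolding EiEc[symmetric] of_int_hom.map_poly_pderiv[symmetric] using x unfolding w_def by (intro Zw_poly Zw_power)
  have xpZ: "x^p \<in> Zw w" using x unfolding w_def by auto
  have "(of_nat N :: complex) = of_nat N * (x^p)^(N-1) * x^p"
  proof -
    have "(x^p)^(N-1) * x^p = (x^p)^N" using N by (metis power_minus_mult)
    also have "\<dots> = 1" using xN by (metis mult.commute power_mult power_one)
    finally show ?thesis by (simp add: mult.assoc)
  qed
  also have "\<dots> = of_nat p * (- y * poly (pderiv Ec) (x^p) * x^p)" unfolding eq1 Dxp by simp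
  finally have Np: "(of_nat N :: complex) = of_nat p * (- y * poly (pderiv Ec) (x^p) * x^p)" .
  define t where "t = - y * poly (pderiv Ec) (x^p) * x^p"
  have tZ: "t \<in> Zw w" unfolding t_def using y(1) E'Z xpZ by auto
  have cop: "coprime p N" using prime_imp_coprime_nat[OF p np] .
  hence "gcd (int p) (int N) = 1" by simp
  then obtain a b where ab: "a * int p + b * int N = 1" using bezout_int[of "int p" "int N"] by auto
  have "(1::complex) = of_int a * of_nat p + of_int b * of_nat N"
    using arg_cong[OF ab, of "of_int :: int \<Rightarrow> complex"] by simp
  also have "\<dots> = of_nat p * (of_int a + of_int b * t)" unfolding Np t_def by (simp add: algebra_simps)
  finally have one: "(1::complex) = of_nat p * (of_int a + of_int b * t)" .
  have "of_int a + of_int b * t \<in> Zw w" using tZ by auto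
  moreover have "of_int a + of_int b * t = (of_rat (1 / of_nat p) :: complex)"
    using one p0 by (simp add: field_simps of_rat_divide)
  ultimately have "(of_rat (1 / of_nat p) :: complex) \<in> \<int>" using Zw_rat_int[OF wN N] by auto
  then obtain k where k: "(of_rat (1 / of_nat p) :: complex) = of_int k" by (elim Ints_cases)
  hence "(1::complex) = of_nat p * of_int k" using p0 by (simp add: of_rat_divide field_simps)
  hence "(1::int) = int p * k" by (metis of_int_1 of_int_eq_iff of_int_mult of_int_of_nat_eq)
  hence "int p dvd 1" by (metis dvdI)
  thus False using p by (simp add: prime_gt_1_nat)
qed




lemma zeta_pow_eq_1:
  assumes N: "N > 0" shows "zeta N ^ m = 1 \<longleftrightarrow> N dvd m"
proof
  assume "N dvd m"
  then obtain k where "m = N * k" by (elim dvdE)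
  thus "zeta N ^ m = 1" using zeta_pow_N[OF N] by (simp add: power_mult)
next
  assume h: "zeta N ^ m = 1"
  have "zeta N ^ (m mod N) = 1" using h w_pow_mod[OF zeta_pow_N[OF N]] by simp
  hence eq: "(\<lambda>k. cis (2 * pi * real k / real N)) (m mod N) = (\<lambda>k. cis (2 * pi * real k / real N)) 0"
    using N by (simp add: zeta_cis DeMoivre mult_ac)
  have inj: "inj_on (\<lambda>k. cis (2 * pi * real k / real N)) {..<N}"
    using bij_betw_roots_unity[OF N] unfolding bij_betw_def by blast
  have "m mod N = 0" by (rule inj_onD[OF inj eq]) (use N in auto)
  thus "N dvd m" by auto
qed

lemma zeta_in_Zw: "zeta N ^ k \<in> Zw (zeta N)" by auto

lemma conj_all:
  fixes g :: "int poly"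
  assumes N: "N > 0" and g0: "poly (of_int_poly g) (zeta N) = 0"
  shows "r > 0 \<Longrightarrow> coprime r N \<Longrightarrow> poly (of_int_poly g) (zeta N ^ r) = 0"
proof (induction r rule: less_induct)
  case (less r)
  show ?case
  proof (cases "r = 1")
    case True thus ?thesis using g0 by simp
  next
    case False
    then obtain p where p: "prime p" "p dvd r" using prime_factor_nat by blast
    then obtain s where rs: "r = p * s" by (elim dvdE)
    have s0: "s > 0" using less.prems(1) rs by (cases s) auto
    have p1: "p > 1" using p(1) prime_gt_1_nat by blast
    have sr: "s < r" using rs s0 p1 by simp
    have cs: "coprime s N" using less.prems(2) rs by simp
    have IH: "poly (of_int_poly g) (zeta N ^ s) = 0" using less.IH[OF sr s0 cs] .
    have np: "\<not> p dvd N"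
    proof
      assume "p dvd N"
      hence "p dvd gcd r N" using p(2) by simp
      moreover have "gcd r N = 1" using less.prems(2) by simp
      ultimately have "p dvd 1" by simp
      thus False using p1 by simp
    qed
    have xN: "(zeta N ^ s) ^ N = 1" using zeta_pow_N[OF N] by (metis power_mult mult.commute power_one)
    have "poly (of_int_poly g) ((zeta N ^ s) ^ p) = 0"
      by (rule conj_step[OF N zeta_in_Zw xN IH p(1) np])
    thus ?thesis unfolding rs by (simp add: power_mult[symmetric] mult.commute)
  qed
qed

lemma geom_root:
  assumes N: "N > 0"
  shows "(\<Sum>r<N. zeta N ^ (r * m)) = (if N dvd m then of_nat N else 0)"
proof (cases "N dvd m")
  case True
  hence zm: "zeta N ^ m = 1" using zeta_pow_eq_1[OF N] by simp
  have "\<And>r. zeta N ^ (r * m) = 1"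
  proof -
    fix r :: nat
    have "zeta N ^ (r * m) = (zeta N ^ m) ^ r" by (simp add: power_mult[symmetric] mult.commute)
    thus "zeta N ^ (r * m) = 1" using zm by simp
  qed
  thus ?thesis using True by simp
next
  case False
  define x where "x = zeta N ^ m"
  have x1: "x \<noteq> 1" unfolding x_def using zeta_pow_eq_1[OF N] False by simp
  have "(\<Sum>r<N. zeta N ^ (r * m)) = (\<Sum>r<N. x ^ r)" unfolding x_def
    by (intro sum.cong refl) (simp add: power_mult[symmetric] mult.commute)
  also have "\<dots> = (x ^ N - 1) / (x - 1)" using x1 by (rule geometric_sum)
  also have "x ^ N = 1" unfolding x_def using zeta_pow_N[OF N] by (metis power_mult mult.commute power_one)
  finally show ?thesis using False by simp
qed




lemma dvd_crt:
  fixes p1 p2 :: nat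
  assumes p1: "prime p1" and p2: "prime p2" and ne: "p1 \<noteq> p2"
  shows "p1 * p2 dvd p2 * a + p1 * b \<longleftrightarrow> p1 dvd a \<and> p2 dvd b"
proof
  assume h: "p1 * p2 dvd p2 * a + p1 * b"
  have n12: "\<not> p1 dvd p2" using p1 p2 ne primes_dvd_imp_eq by blast
  have n21: "\<not> p2 dvd p1" using p1 p2 ne primes_dvd_imp_eq by blast
  have "p1 dvd p2 * a + p1 * b" using h by (metis dvd_mult_left)
  hence "p1 dvd p2 * a" by (simp add: dvd_add_left_iff)
  hence a: "p1 dvd a" using p1 n12 prime_dvd_mult_iff by blast
  have "p2 dvd p2 * a + p1 * b" using h by (metis dvd_mult_right)
  hence "p2 dvd p1 * b" by (simp add: dvd_add_right_iff)
  hence b: "p2 dvd b" using p2 n21 prime_dvd_mult_iff by blast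
  show "p1 dvd a \<and> p2 dvd b" using a b by blast
next
  assume "p1 dvd a \<and> p2 dvd b"
  then obtain a' b' where "a = p1 * a'" "b = p2 * b'" by (auto elim!: dvdE)
  hence "p2 * a + p1 * b = (p1 * p2) * (a' + b')" by (simp add: algebra_simps)
  thus "p1 * p2 dvd p2 * a + p1 * b" by simp
qed

locale twop =
  fixes p1 p2 :: nat
  assumes p1: "prime p1" and p2: "prime p2" and ne: "p1 \<noteq> p2"
begin

definition "NN = p1 * p2"
definition "z = zeta NN"

lemma NN0: "NN > 0" unfolding NN_def using p1 p2 by (simp add: prime_gt_0_nat)

lemma single:
  "(\<Sum>r<NN. z^(r*(p2*a)) * z^(r*(p1*b))) = (if p1 dvd a \<and> p2 dvd b then of_nat NN else 0)"
proof -
  have "(\<Sum>r<NN. z^(r*(p2*a)) * z^(r*(p1*b))) = (\<Sum>r<NN. zeta NN ^ (r * (p2*a + p1*b)))"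
    unfolding z_def by (intro sum.cong refl) (simp add: power_add[symmetric] distrib_left)
  also have "\<dots> = (if NN dvd (p2*a + p1*b) then of_nat NN else 0)" by (rule geom_root[OF NN0])
  also have "NN dvd (p2*a + p1*b) \<longleftrightarrow> p1 dvd a \<and> p2 dvd b" unfolding NN_def by (rule dvd_crt[OF p1 p2 ne])
  finally show ?thesis .
qed

lemma orth_inner:
  "(\<Sum>r<NN. z^(r*(p2*a)) * (\<Sum>(c,b)\<leftarrow>L2. c * z^(r*(p1*b)))) =
     (if p1 dvd a then of_nat NN else 0) * (\<Sum>(c,b)\<leftarrow>L2. if p2 dvd b then c else 0)"
proof (induction L2)
  case Nil thus ?case by simp
next
  case (Cons cb L2)
  obtain c b where cb: "cb = (c,b)" by (cases cb)
  have "(\<Sum>r<NN. z^(r*(p2*a)) * (\<Sum>(c,b)\<leftarrow>cb#L2. c * z^(r*(p1*b)))) =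
        c * (\<Sum>r<NN. z^(r*(p2*a)) * z^(r*(p1*b))) + (\<Sum>r<NN. z^(r*(p2*a)) * (\<Sum>(c,b)\<leftarrow>L2. c * z^(r*(p1*b))))"
    unfolding cb by (simp add: sum.distrib sum_distrib_left algebra_simps)
  also have "\<dots> = (if p1 dvd a then of_nat NN else 0) * (\<Sum>(c,b)\<leftarrow>cb#L2. if p2 dvd b then c else 0)"
    unfolding Cons.IH single cb by (simp add: algebra_simps)
  finally show ?case .
qed

lemma orthL:
  "(\<Sum>r<NN. (\<Sum>(c,a)\<leftarrow>L1. c * z^(r*(p2*a))) * (\<Sum>(c,b)\<leftarrow>L2. c * z^(r*(p1*b)))) =
     of_nat NN * (\<Sum>(c,a)\<leftarrow>L1. if p1 dvd a then c else 0) * (\<Sum>(c,b)\<leftarrow>L2. if p2 dvd b then c else 0)"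
proof (induction L1)
  case Nil thus ?case by simp
next
  case (Cons ca L1)
  obtain c a where ca: "ca = (c,a)" by (cases ca)
  have "(\<Sum>r<NN. (\<Sum>(c,a)\<leftarrow>ca#L1. c * z^(r*(p2*a))) * (\<Sum>(c,b)\<leftarrow>L2. c * z^(r*(p1*b)))) =
        c * (\<Sum>r<NN. z^(r*(p2*a)) * (\<Sum>(c,b)\<leftarrow>L2. c * z^(r*(p1*b)))) +
        (\<Sum>r<NN. (\<Sum>(c,a)\<leftarrow>L1. c * z^(r*(p2*a))) * (\<Sum>(c,b)\<leftarrow>L2. c * z^(r*(p1*b))))"
    unfolding ca by (simp add: sum.distrib sum_distrib_left algebra_simps)
  also have "\<dots> = of_nat NN * (\<Sum>(c,a)\<leftarrow>ca#L1. if p1 dvd a then c else 0) * (\<Sum>(c,b)\<leftarrow>L2. if p2 dvd b then c else 0)"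
    unfolding Cons.IH orth_inner ca by (simp add: algebra_simps)
  finally show ?case .
qed

end




lemma dvd_small: fixes p k :: nat assumes "0 < k" "k < 2 * p" shows "p dvd k \<longleftrightarrow> k = p"
proof
  assume "p dvd k"
  then obtain m where m: "k = p * m" by (elim dvdE)
  have "m \<noteq> 0" using assms m by auto
  moreover have "m < 2" using assms m by (metis mult.commute nat_mult_less_cancel_disj)
  ultimately have "m = 1" by linarith
  thus "k = p" using m by simp
qed simp

context twop
begin

definition "EE r i = z^(r*(p2*i)) + z^(r*(p2*(p1-i)))"
definition "BB r j = z^(r*(p1*j)) + z^(r*(p1*(p2-j)))"

definition "L1 i i0 = [(1::complex, i+i0), (1, i+(p1-i0)), (1, (p1-i)+i0), (1, (p1-i)+(p1-i0)), (-2, i), (-2, p1-i)]"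
definition "L2 j j0 = [(1::complex, j+j0), (1, j+(p2-j0)), (1, (p2-j)+j0), (1, (p2-j)+(p2-j0)), (-2, j), (-2, p2-j)]"

lemma EE_list: "EE r i * (EE r i0 - 2) = (\<Sum>(c,a)\<leftarrow>L1 i i0. c * z^(r*(p2*a)))"
  unfolding EE_def L1_def by (simp add: algebra_simps power_add)

lemma BB_list: "BB r j * (BB r j0 - 2) = (\<Sum>(c,b)\<leftarrow>L2 j j0. c * z^(r*(p1*b)))"
  unfolding BB_def L2_def by (simp add: algebra_simps power_add)

lemma L_sum:
  fixes p :: nat and n i i0 :: nat
  assumes "2 * n < p" "1 \<le> i" "i \<le> n" "1 \<le> i0" "i0 \<le> n"
  shows "(\<Sum>(c,a)\<leftarrow>[(1::complex, i+i0), (1, i+(p-i0)), (1, (p-i)+i0), (1, (p-i)+(p-i0)), (-2, i), (-2, p-i)].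
            if p dvd a then c else 0) = (if i = i0 then 2 else 0)"
proof -
  have a: "\<not> p dvd (i+i0)" using assms dvd_small[of "i+i0" p] by auto
  have b: "p dvd (i+(p-i0)) \<longleftrightarrow> i = i0" using assms dvd_small[of "i+(p-i0)" p] by auto
  have c: "p dvd ((p-i)+i0) \<longleftrightarrow> i = i0" using assms dvd_small[of "(p-i)+i0" p] by auto
  have d: "\<not> p dvd ((p-i)+(p-i0))" using assms dvd_small[of "(p-i)+(p-i0)" p] by auto
  have e: "\<not> p dvd i" using assms dvd_small[of i p] by auto
  have f: "\<not> p dvd (p-i)" using assms dvd_small[of "p-i" p] by auto
  show ?thesis using a b c d e f by auto
qed

end



context twop
begin

lemma indep:
  fixes d :: "nat \<Rightarrow> nat \<Rightarrow> int" and n1 n2 :: nat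
  assumes n1: "2 * n1 < p1" "1 \<le> n1" and n2: "2 * n2 < p2" "1 \<le> n2"
    and rel: "(\<Sum>i\<in>{1..n1}. \<Sum>j\<in>{1..n2}. of_int (d i j) * EE 1 i * BB 1 j) = 0"
  shows "d n1 n2 = 0"
proof -
  define g :: "int poly" where "g = (\<Sum>i\<in>{1..n1}. \<Sum>j\<in>{1..n2}. Polynomial.smult (d i j)
       ((monom 1 (p2*i) + monom 1 (p2*(p1-i))) * (monom 1 (p1*j) + monom 1 (p1*(p2-j)))))"
  have gev: "\<And>r. poly (of_int_poly g) (z^r) = (\<Sum>i\<in>{1..n1}. \<Sum>j\<in>{1..n2}. of_int (d i j) * EE r i * BB r j)"
    unfolding g_def EE_def BB_def
    by (simp add: of_int_poly_hom.hom_sum poly_sum of_int_hom.map_poly_hom_smult poly_monom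
         of_int_poly_hom.hom_mult of_int_poly_hom.hom_add power_mult[symmetric] mult_ac)
  have g1: "poly (of_int_poly g) (zeta NN) = 0" using gev[of 1] rel unfolding z_def by simp
  define T where "T r = (EE r n1 - 2) * (BB r n2 - 2)" for r
  have zero: "poly (of_int_poly g) (z^r) * T r = 0" if r: "r < NN" for r
  proof (cases "coprime r NN")
    case True
    have pp: "p1 > 1" "p2 > 1" using p1 p2 prime_gt_1_nat by auto
    have NN1: "NN > 1" unfolding NN_def using less_1_mult[OF pp] .
    have r0: "r > 0"
    proof (rule ccontr)
      assume "\<not> r > 0"
      hence "r = 0" by simp
      hence "NN = 1" using True by simp
      thus False using NN1 by simp
    qed
    have "poly (of_int_poly g) (zeta NN ^ r) = 0" by (rule conj_all[OF NN0 g1 r0 True])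
    thus ?thesis unfolding z_def by simp
  next
    case False
    have "p1 dvd r \<or> p2 dvd r"
    proof (rule ccontr)
      assume "\<not> (p1 dvd r \<or> p2 dvd r)"
      hence "coprime p1 r" "coprime p2 r" using prime_imp_coprime_nat p1 p2 by auto
      hence "coprime (p1*p2) r" by simp
      thus False using False unfolding NN_def by (simp add: ac_simps)
    qed
    thus ?thesis
    proof
      assume "p1 dvd r"
      then obtain s where s: "r = p1 * s" by (elim dvdE)
      have "\<And>k. z^(r*(p2*k)) = 1"
      proof -
        fix k
        have "NN dvd r*(p2*k)" unfolding s NN_def by (simp add: mult_ac)
        thus "z^(r*(p2*k)) = 1" unfolding z_def using zeta_pow_eq_1[OF NN0] by blast
      qed
      hence "EE r n1 = 2" unfolding EE_def by simp
      thus ?thesis unfolding T_def by simp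
    next
      assume "p2 dvd r"
      then obtain s where s: "r = p2 * s" by (elim dvdE)
      have "\<And>k. z^(r*(p1*k)) = 1"
      proof -
        fix k
        have "NN dvd r*(p1*k)" unfolding s NN_def by (simp add: mult_ac)
        thus "z^(r*(p1*k)) = 1" unfolding z_def using zeta_pow_eq_1[OF NN0] by blast
      qed
      hence "BB r n2 = 2" unfolding BB_def by simp
      thus ?thesis unfolding T_def by simp
    qed
  qed
  have "0 = (\<Sum>r<NN. poly (of_int_poly g) (z^r) * T r)" using zero by (intro sum.neutral[symmetric]) blast
  also have "\<dots> = (\<Sum>r<NN. \<Sum>i\<in>{1..n1}. \<Sum>j\<in>{1..n2}. of_int (d i j) * ((EE r i * (EE r n1 - 2)) * (BB r j * (BB r n2 - 2))))"
  proof (intro sum.cong refl)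
    fix r
    have "poly (of_int_poly g) (z^r) * T r = (\<Sum>i\<in>{1..n1}. \<Sum>j\<in>{1..n2}. of_int (d i j) * EE r i * BB r j * T r)"
      unfolding gev by (simp only: sum_distrib_right)
    also have "\<dots> = (\<Sum>i\<in>{1..n1}. \<Sum>j\<in>{1..n2}. of_int (d i j) * ((EE r i * (EE r n1 - 2)) * (BB r j * (BB r n2 - 2))))"
      unfolding T_def by (intro sum.cong refl) (simp add: mult_ac)
    finally show "poly (of_int_poly g) (z^r) * T r = (\<Sum>i\<in>{1..n1}. \<Sum>j\<in>{1..n2}. of_int (d i j) * ((EE r i * (EE r n1 - 2)) * (BB r j * (BB r n2 - 2))))" .
  qed
  also have "\<dots> = (\<Sum>i\<in>{1..n1}. \<Sum>r<NN. \<Sum>j\<in>{1..n2}. of_int (d i j) * ((EE r i * (EE r n1 - 2)) * (BB r j * (BB r n2 - 2))))"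
    by (rule sum.swap)
  also have "\<dots> = (\<Sum>i\<in>{1..n1}. \<Sum>j\<in>{1..n2}. \<Sum>r<NN. of_int (d i j) * ((EE r i * (EE r n1 - 2)) * (BB r j * (BB r n2 - 2))))"
    by (rule sum.cong[OF refl], rule sum.swap)
  also have "\<dots> = (\<Sum>i\<in>{1..n1}. \<Sum>j\<in>{1..n2}. of_int (d i j) * (\<Sum>r<NN. (EE r i * (EE r n1 - 2)) * (BB r j * (BB r n2 - 2))))"
    by (simp only: sum_distrib_left)
  also have "\<dots> = (\<Sum>i\<in>{1..n1}. \<Sum>j\<in>{1..n2}. of_int (d i j) * (of_nat NN * (if i = n1 then 2 else 0) * (if j = n2 then 2 else 0)))"
  proof (intro sum.cong refl)
    fix i j assume i: "i \<in> {1..n1}" and j: "j \<in> {1..n2}"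
    have "(\<Sum>r<NN. (EE r i * (EE r n1 - 2)) * (BB r j * (BB r n2 - 2))) =
          of_nat NN * (\<Sum>(c,a)\<leftarrow>L1 i n1. if p1 dvd a then c else 0) * (\<Sum>(c,b)\<leftarrow>L2 j n2. if p2 dvd b then c else 0)"
      unfolding EE_list BB_list by (rule orthL)
    also have "(\<Sum>(c,a)\<leftarrow>L1 i n1. if p1 dvd a then c else 0) = (if i = n1 then 2 else 0)"
      unfolding L1_def using L_sum[of n1 p1 i n1] n1 i by simp
    also have "(\<Sum>(c,b)\<leftarrow>L2 j n2. if p2 dvd b then c else 0) = (if j = n2 then 2 else 0)"
      unfolding L2_def using L_sum[of n2 p2 j n2] n2 j by simp
    finally show "of_int (d i j) * (\<Sum>r<NN. (EE r i * (EE r n1 - 2)) * (BB r j * (BB r n2 - 2))) =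
        of_int (d i j) * (of_nat NN * (if i = n1 then 2 else 0) * (if j = n2 then 2 else 0))" by simp
  qed
  also have "\<dots> = (\<Sum>i\<in>{1..n1}. if i = n1 then (\<Sum>j\<in>{1..n2}. if j = n2 then of_int (d n1 n2) * (of_nat NN * 4) else 0) else 0)"
  proof (rule sum.cong[OF refl])
    fix i assume "i \<in> {1..n1}"
    show "(\<Sum>j\<in>{1..n2}. of_int (d i j) * (of_nat NN * (if i = n1 then 2 else 0) * (if j = n2 then 2 else 0))) =
        (if i = n1 then (\<Sum>j\<in>{1..n2}. if j = n2 then of_int (d n1 n2) * (of_nat NN * 4) else 0) else (0::complex))"
    proof (cases "i = n1")
      case True
      have "(\<Sum>j\<in>{1..n2}. of_int (d i j) * (of_nat NN * (if i = n1 then 2 else 0) * (if j = n2 then 2 else 0))) =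
          (\<Sum>j\<in>{1..n2}. if j = n2 then of_int (d n1 n2) * (of_nat NN * 4) else (0::complex))"
        by (rule sum.cong) (auto simp: True)
      thus ?thesis using True by (simp only: if_True refl simp_thms)
    next
      case False
      thus ?thesis by simp
    qed
  qed
  also have "\<dots> = of_int (d n1 n2) * (of_nat NN * 4)"
    using n1 n2 by simp
  finally have "of_int (d n1 n2) * (of_nat NN * 4) = (0::complex)" by simp
  thus ?thesis using NN0 by simp
qed

end



lemma zeta_sub: assumes "a > 0" "b > 0" shows "zeta (a * b) ^ b = zeta a"
proof -
  have "zeta (a * b) ^ b = cis (real b * (2 * pi / real (a * b)))" using assms by (simp add: zeta_cis DeMoivre)
  also have "real b * (2 * pi / real (a * b)) = 2 * pi / real a" using assms by (simp add: field_simps)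
  finally show ?thesis using assms by (simp add: zeta_cis)
qed

lemma zeta_ne0: "zeta p \<noteq> 0" unfolding zeta_def by simp

lemma ee_nat: "ee p (int k) = zeta p ^ k + inverse (zeta p) ^ k"
  unfolding ee_def by (simp add: power_int_minus power_inverse)

lemma ee_int_eq:
  assumes p: "p > 0" and k: "k \<le> p"
  shows "ee p (int k) = zeta p ^ k + zeta p ^ (p - k)"
proof -
  have "zeta p ^ k * zeta p ^ (p - k) = zeta p ^ p" using k by (simp add: power_add[symmetric])
  also have "\<dots> = 1" using zeta_pow_N[OF p] .
  finally have "inverse (zeta p ^ k) = zeta p ^ (p - k)" by (rule inverse_unique)
  thus ?thesis unfolding ee_nat by (simp add: power_inverse)
qed

lemma sum_delta2:
  fixes f :: "nat \<Rightarrow> nat \<Rightarrow> 'a::comm_monoid_add"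
  assumes "finite A" "finite B" "a \<in> A" "b \<in> B"
  shows "(\<Sum>i\<in>A. \<Sum>j\<in>B. if i = a \<and> j = b then f i j else 0) = f a b"
proof -
  have "(\<Sum>i\<in>A. \<Sum>j\<in>B. if i = a \<and> j = b then f i j else 0) = (\<Sum>i\<in>A. if i = a then f i b else 0)"
  proof (rule sum.cong[OF refl])
    fix i show "(\<Sum>j\<in>B. if i = a \<and> j = b then f i j else 0) = (if i = a then f i b else 0)"
      using assms by (cases "i = a") (simp_all add: sum.delta)
  qed
  also have "\<dots> = f a b" using assms by (simp add: sum.delta)
  finally show ?thesis .
qed

lemma ee_in_field:
  fixes F :: "complex set"
  assumes e1: "zeta p + inverse (zeta p) \<in> F" and one: "1 \<in> F"
    and cl: "\<forall>x\<in>F. \<forall>y\<in>F. x + y \<in> F \<and> x * y \<in> F \<and> - x \<in> F \<and> inverse x \<in> F"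
  shows "ee p (int k) \<in> F \<and> ee p (int (Suc k)) \<in> F"
proof (induction k)
  case 0
  have "ee p (int 0) = 1 + 1" unfolding ee_nat by simp
  moreover have "1 + 1 \<in> F" using one cl by blast
  ultimately have "ee p (int 0) \<in> F" by simp
  moreover have "ee p (int (Suc 0)) \<in> F" using e1 unfolding ee_nat by simp
  ultimately show ?case by simp
next
  case (Suc k)
  define u where "u = zeta p"
  define v where "v = inverse u"
  have u0: "u \<noteq> 0" unfolding u_def by (rule zeta_ne0)
  have uv: "u * v = 1" unfolding v_def using u0 by simp
  have "(u + v) * (u ^ Suc k + v ^ Suc k) = u ^ Suc (Suc k) + v ^ Suc (Suc k) + (u * v) * (u ^ k + v ^ k)"
    by (simp add: algebra_simps)
  hence eq: "u ^ Suc (Suc k) + v ^ Suc (Suc k) = (u + v) * (u ^ Suc k + v ^ Suc k) + - (u ^ k + v ^ k)"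
    unfolding uv by simp
  hence eq: "u ^ Suc (Suc k) + inverse u ^ Suc (Suc k) = (u + inverse u) * (u ^ Suc k + inverse u ^ Suc k) + - (u ^ k + inverse u ^ k)"
    unfolding v_def .
  have A: "(zeta p + inverse (zeta p)) * ee p (int (Suc k)) \<in> F" using Suc e1 cl by blast
  have B: "- ee p (int k) \<in> F" using Suc cl by blast
  have "(zeta p + inverse (zeta p)) * ee p (int (Suc k)) + - ee p (int k) \<in> F" using A B cl by blast
  hence "ee p (int (Suc (Suc k))) \<in> F" unfolding ee_nat u_def[symmetric] eq .
  thus ?case using Suc by simp
qed




lemma ee_prod:
  fixes p n :: nat
  assumes p: "p = 2 * n + 1" and n: "n \<ge> 1"
  shows "ee p (int n) * ee p (int 1) = ee p (int n) + ee p (int (n - 1))"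
proof -
  define u where "u = zeta p"
  define v where "v = inverse u"
  have p0: "p > 0" using p by simp
  have u0: "u \<noteq> 0" unfolding u_def by (rule zeta_ne0)
  have uv: "u * v = 1" unfolding v_def using u0 by simp
  have up: "u ^ p = 1" unfolding u_def using zeta_pow_N[OF p0] .
  have vp: "v ^ p = 1" unfolding v_def power_inverse up by simp
  have "u ^ (n+1) * u ^ n = u ^ p" unfolding p power_add[symmetric] by (simp add: mult_2)
  hence "u ^ (n+1) = inverse (u ^ n)" using up u0 by (simp add: field_simps)
  hence a: "u ^ (n+1) = v ^ n" unfolding v_def by (simp add: power_inverse)
  have "v ^ (n+1) * v ^ n = v ^ p" unfolding p power_add[symmetric] by (simp add: mult_2)
  hence "v ^ (n+1) = inverse (v ^ n)" using vp u0 unfolding v_def by (simp add: field_simps)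
  hence b: "v ^ (n+1) = u ^ n" unfolding v_def by (simp add: power_inverse)
  obtain m where m: "n = Suc m" using n by (cases n) auto
  have "(u ^ n + v ^ n) * (u + v) = u ^ (n+1) + v ^ (n+1) + (u * v) * (u ^ m + v ^ m)"
    unfolding m by (simp add: power_Suc algebra_simps)
  also have "u ^ (n+1) + v ^ (n+1) + (u * v) * (u ^ m + v ^ m) = (u ^ n + v ^ n) + (u ^ m + v ^ m)"
    unfolding a b uv by simp
  finally have "(u ^ n + v ^ n) * (u + v) = (u ^ n + v ^ n) + (u ^ (n - 1) + v ^ (n - 1))"
    using m by (metis diff_Suc_1)
  thus ?thesis unfolding ee_nat v_def u_def by simp
qed

theorem proposition3p8:
  fixes p1 p2 :: nat
  assumes "prime p1" and "prime p2" and "p1 \<ge> 5" and "p2 \<ge> 5" and "p1 \<noteq> p2"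
  shows "\<not> (\<forall>x\<in>ring_of_integers (KK p1 p2). \<forall>y\<in>II p1 p2. x * y \<in> II p1 p2)"
proof
  assume H: "\<forall>x\<in>ring_of_integers (KK p1 p2). \<forall>y\<in>II p1 p2. x * y \<in> II p1 p2"
  interpret twop p1 p2 using assms by unfold_locales
  define n1 where "n1 = (p1 - 1) div 2"
  define n2 where "n2 = (p2 - 1) div 2"
  have o1: "odd p1" using assms(1,3) prime_odd_nat by auto
  have o2: "odd p2" using assms(2,4) prime_odd_nat by auto
  have p1n: "p1 = 2 * n1 + 1" unfolding n1_def using o1 assms(3) by (auto elim!: oddE)
  have p2n: "p2 = 2 * n2 + 1" unfolding n2_def using o2 assms(4) by (auto elim!: oddE)
  have n1b: "2 * n1 < p1" "2 \<le> n1" using p1n assms(3) by auto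
  have n2b: "2 * n2 < p2" "2 \<le> n2" using p2n assms(4) by auto
  have p10: "p1 > 0" and p20: "p2 > 0" using p1n p2n by auto
  have z1: "zeta p1 = z ^ p2" unfolding z_def NN_def using zeta_sub[OF p10 p20] by simp
  have z2: "zeta p2 = z ^ p1" unfolding z_def NN_def using zeta_sub[OF p20 p10] by (simp add: mult.commute)
  have eeE: "ee p1 (int i) = EE 1 i" if "i \<le> p1" for i
    unfolding ee_int_eq[OF p10 that] EE_def z1 by (simp add: power_mult[symmetric])
  have eeB: "ee p2 (int j) = BB 1 j" if "j \<le> p2" for j
    unfolding ee_int_eq[OF p20 that] BB_def z2 by (simp add: power_mult[symmetric])
  define x0 where "x0 = ee p1 (int n1)"
  have x0K: "x0 \<in> KK p1 p2"
    unfolding KK_def subfield_gen_def x0_def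
  proof (rule InterI)
    fix F assume "F \<in> {F. {zeta p1 + inverse (zeta p1), zeta p2 + inverse (zeta p2)} \<subseteq> F \<and> 1 \<in> F \<and>
      (\<forall>x\<in>F. \<forall>y\<in>F. x + y \<in> F \<and> x * y \<in> F \<and> - x \<in> F \<and> inverse x \<in> F)}"
    hence F: "zeta p1 + inverse (zeta p1) \<in> F" "1 \<in> F" "\<forall>x\<in>F. \<forall>y\<in>F. x + y \<in> F \<and> x * y \<in> F \<and> - x \<in> F \<and> inverse x \<in> F"
      by auto
    show "ee p1 (int n1) \<in> F" using ee_in_field[OF F] by blast
  qed
  have x0E: "x0 = EE 1 n1" using eeE[of n1] n1b unfolding x0_def by simp
  have x0Z: "x0 \<in> Zw z" unfolding x0E EE_def by (intro Zw_add Zw_power Zw_w)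
  have x0A: "algebraic_int x0"
    using Zw_algebraic_int[OF _ NN0 x0Z] zeta_pow_N[OF NN0] unfolding z_def by blast
  have x0R: "x0 \<in> ring_of_integers (KK p1 p2)" unfolding ring_of_integers_def using x0K x0A by blast
  define y0 where "y0 = ee p1 (int 1) * ee p2 (int n2)"
  have by0: "basis_elt p1 p2 1 n2 = y0" unfolding basis_elt_def y0_def n1_def[symmetric] n2_def[symmetric]
    using n1b by simp
  have y0I: "y0 \<in> II p1 p2"
  proof -
    define c0 :: "nat \<Rightarrow> nat \<Rightarrow> int" where "c0 i j = (if i = 1 \<and> j = n2 then 1 else 0)" for i j
    have "(\<Sum>i\<in>{1..n1}. \<Sum>j\<in>{1..n2}. of_int (c0 i j) * basis_elt p1 p2 i j) =
          (\<Sum>i\<in>{1..n1}. \<Sum>j\<in>{1..n2}. if i = 1 \<and> j = n2 then basis_elt p1 p2 i j else 0)"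
      unfolding c0_def by (intro sum.cong refl) simp
    also have "\<dots> = basis_elt p1 p2 1 n2" using n1b n2b by (intro sum_delta2) auto
    finally show ?thesis unfolding II_def n1_def[symmetric] n2_def[symmetric] using by0 by auto
  qed
  have xy: "x0 * y0 \<in> II p1 p2" using H x0R y0I by blast
  then obtain c :: "nat \<Rightarrow> nat \<Rightarrow> int" where
    c: "x0 * y0 = (\<Sum>i\<in>{1..n1}. \<Sum>j\<in>{1..n2}. of_int (c i j) * basis_elt p1 p2 i j)"
    unfolding II_def n1_def[symmetric] n2_def[symmetric] by blast
  have prod: "x0 * y0 = ee p1 (int n1) * ee p2 (int n2) + ee p1 (int (n1-1)) * ee p2 (int n2)"
  proof -
    have "x0 * y0 = (ee p1 (int n1) * ee p1 (int 1)) * ee p2 (int n2)" unfolding x0_def y0_def by (simp only: mult.assoc)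
    also have "ee p1 (int n1) * ee p1 (int 1) = ee p1 (int n1) + ee p1 (int (n1 - 1))"
      using ee_prod[OF p1n] n1b by simp
    finally show ?thesis by (simp add: algebra_simps)
  qed
  define d :: "nat \<Rightarrow> nat \<Rightarrow> int" where "d i j = c i j * (if i = n1 \<and> j = n2 then 2 else 1)
      - (if i = n1 \<and> j = n2 then 1 else 0) - (if i = n1 - 1 \<and> j = n2 then 1 else 0)" for i j
  have nn: "n1 - 1 \<noteq> n1" using n1b by simp
  have termw: "of_int (d i j) * ee p1 (int i) * ee p2 (int j) = of_int (c i j) * basis_elt p1 p2 i j
      - (if i = n1 \<and> j = n2 then ee p1 (int i) * ee p2 (int j) else 0)
      - (if i = n1 - 1 \<and> j = n2 then ee p1 (int i) * ee p2 (int j) else 0)" for i j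
    unfolding d_def basis_elt_def n1_def[symmetric] n2_def[symmetric] using nn
    by (cases "i = n1 \<and> j = n2"; cases "i = n1 - 1 \<and> j = n2") (auto simp: algebra_simps)
  have fin: "finite {1..n1}" "finite {1..n2}" by auto
  have mem: "n1 \<in> {1..n1}" "n1 - 1 \<in> {1..n1}" "n2 \<in> {1..n2}" using n1b n2b by auto
  have "(\<Sum>i\<in>{1..n1}. \<Sum>j\<in>{1..n2}. of_int (d i j) * ee p1 (int i) * ee p2 (int j)) =
      (\<Sum>i\<in>{1..n1}. \<Sum>j\<in>{1..n2}. of_int (c i j) * basis_elt p1 p2 i j)
      - (\<Sum>i\<in>{1..n1}. \<Sum>j\<in>{1..n2}. if i = n1 \<and> j = n2 then ee p1 (int i) * ee p2 (int j) else 0)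
      - (\<Sum>i\<in>{1..n1}. \<Sum>j\<in>{1..n2}. if i = n1 - 1 \<and> j = n2 then ee p1 (int i) * ee p2 (int j) else 0)"
    unfolding termw by (simp only: sum_subtractf)
  also have "\<dots> = x0 * y0 - ee p1 (int n1) * ee p2 (int n2) - ee p1 (int (n1-1)) * ee p2 (int n2)"
    unfolding c[symmetric] sum_delta2[OF fin mem(1) mem(3)] sum_delta2[OF fin mem(2) mem(3)] ..
  also have "\<dots> = 0" unfolding prod by simp
  finally have rel0: "(\<Sum>i\<in>{1..n1}. \<Sum>j\<in>{1..n2}. of_int (d i j) * ee p1 (int i) * ee p2 (int j)) = 0" .
  have "(\<Sum>i\<in>{1..n1}. \<Sum>j\<in>{1..n2}. of_int (d i j) * EE 1 i * BB 1 j) =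
        (\<Sum>i\<in>{1..n1}. \<Sum>j\<in>{1..n2}. of_int (d i j) * ee p1 (int i) * ee p2 (int j))"
  proof (intro sum.cong refl)
    fix i j assume i: "i \<in> {1..n1}" and j: "j \<in> {1..n2}"
    have "i \<le> p1" "j \<le> p2" using i j n1b n2b by auto
    thus "of_int (d i j) * EE 1 i * BB 1 j = of_int (d i j) * ee p1 (int i) * ee p2 (int j)"
      using eeE eeB by simp
  qed
  hence rel: "(\<Sum>i\<in>{1..n1}. \<Sum>j\<in>{1..n2}. of_int (d i j) * EE 1 i * BB 1 j) = 0" using rel0 by simp
  have "d n1 n2 = 0" by (rule indep[OF n1b(1) _ n2b(1) _ rel]) (use n1b n2b in auto)
  hence "c n1 n2 * 2 - 1 = 0" unfolding d_def using nn by simp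
  thus False by presburger
qed


end
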